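(* Let $x$ be an envy-free complete connected division of a cake among $n$ players. Then there is no connected division $y$ (partial or complete) that strictly Pareto dominates $x$, i.e., there is no connected division $y$ with $u_i(y,i)>u_i(x,i)$ for all $i\in\{1,\dots,n\}$.
   Context: A cake is the interval $[0,1]$. There are $n$ players; each player $i$ has a valuation $v_i$, a nonatomic probability measure on $[0,1]$. A (connected) division $x$ is a sequence $(X_1,\dots,X_n)$ of pairwise disjoint open intervals of $[0,1]$ (possibly empty), $X_i$ being the piece of player $i$; it is complete if the union of the closures of the $X_i$ equals $[0,1]$, and partial otherwise. Write $u_i(x,j)=v_i(X_j)$. $x$ is envy-free if $u_i(x,i)\ge u_i(x,j)$ for all $i,j$. *)

theory Defs
  imports "HOL-Probability.Probability"
begin

definition nonatomic :: "'a measure \<Rightarrow> bool" where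
  "nonatomic M \<longleftrightarrow> (\<forall>A\<in>sets M. 0 < measure M A \<longrightarrow>
      (\<exists>B\<in>sets M. B \<subseteq> A \<and> 0 < measure M B \<and> measure M B < measure M A))"

definition valuation :: "real measure \<Rightarrow> bool" where
  "valuation M \<longleftrightarrow> prob_space M \<and> sets M = sets (restrict_space borel {0..1}) \<and> nonatomic M"

definition open_interval01 :: "real set \<Rightarrow> bool" where
  "open_interval01 X \<longleftrightarrow> (\<exists>a b. 0 \<le> a \<and> b \<le> 1 \<and> X = {a<..<b})"

text \<open>A connected division among players 0..n-1: piece X i of player i.\<close>
definition connected_division :: "nat \<Rightarrow> (nat \<Rightarrow> real set) \<Rightarrow> bool" where
  "connected_division n X \<longleftrightarrow> (\<forall>i<n. open_interval01 (X i)) \<and>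
      (\<forall>i<n. \<forall>j<n. i \<noteq> j \<longrightarrow> X i \<inter> X j = {})"

definition complete_division :: "nat \<Rightarrow> (nat \<Rightarrow> real set) \<Rightarrow> bool" where
  "complete_division n X \<longleftrightarrow> connected_division n X \<and> (\<Union>i<n. closure (X i)) = {0..1}"

definition util :: "(nat \<Rightarrow> real measure) \<Rightarrow> (nat \<Rightarrow> real set) \<Rightarrow> nat \<Rightarrow> nat \<Rightarrow> real" where
  "util v X i j = measure (v i) (X j)"

definition envy_free :: "nat \<Rightarrow> (nat \<Rightarrow> real measure) \<Rightarrow> (nat \<Rightarrow> real set) \<Rightarrow> bool" where
  "envy_free n v X \<longleftrightarrow> (\<forall>i<n. \<forall>j<n. util v X i i \<ge> util v X i j)"

end

theory Submission
  imports Defs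
begin

lemma cover_left:
  fixes a b :: "nat \<Rightarrow> real"
  assumes cov: "(\<Union>j<n. closure {a j<..<b j}) = {0..1}" and p: "0 \<le> p" "p < 1"
  shows "\<exists>j<n. a j \<le> p \<and> p < b j"
proof -
  define S where "S = insert 1 {a j | j. j < n \<and> a j > p}"
  have fS: "finite S" unfolding S_def by auto
  define q where "q = Min S"
  have qS: "q \<in> S" unfolding q_def using fS by (intro Min_in) (auto simp: S_def)
  have qp: "q > p" using qS p unfolding S_def by auto
  have qle: "\<And>x. x \<in> S \<Longrightarrow> q \<le> x" unfolding q_def using fS by simp
  have q1: "q \<le> 1" using qle by (simp add: S_def)
  define m where "m = (p + q) / 2"
  have "m \<in> {0..1}" using p qp q1 by (simp add: m_def)
  then obtain j where j: "j < n" "m \<in> closure {a j<..<b j}" using cov by blast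
  have ab: "a j < b j" using j(2) by (cases "a j < b j") auto
  hence "m \<in> {a j..b j}" using j(2) by simp
  moreover have "\<not> a j > p"
  proof
    assume "a j > p" hence "a j \<in> S" using j(1) by (auto simp: S_def)
    hence "q \<le> a j" by (rule qle)
    thus False using \<open>m \<in> {a j..b j}\<close> qp by (simp add: m_def)
  qed
  ultimately show ?thesis using j(1) qp by (auto simp: m_def)
qed

lemma choice_lt:
  assumes "\<forall>i<(n::nat). \<exists>x. P i x"
  obtains f where "\<And>i. i < n \<Longrightarrow> P i (f i)"
proof -
  have "\<forall>i. \<exists>x. i < n \<longrightarrow> P i x" using assms by blast
  then obtain f where "\<forall>i. i < n \<longrightarrow> P i (f i)" by (rule choice[THEN exE])
  thus ?thesis using that by blast
qed

lemma oi_pair: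
  assumes "open_interval01 Z"
  shows "\<exists>ab. 0 \<le> fst ab \<and> snd ab \<le> 1 \<and> Z = {fst ab<..<snd ab}"
proof -
  obtain a b where "0 \<le> a" "b \<le> 1" "Z = {a<..<b}" using assms unfolding open_interval01_def by blast
  thus ?thesis by (intro exI[of _ "(a,b)"]) simp
qed

theorem theorem4:
  fixes n :: nat and v :: "nat \<Rightarrow> real measure" and X :: "nat \<Rightarrow> real set"
  assumes "\<forall>i<n. valuation (v i)"
    and "complete_division n X"
    and "envy_free n v X"
  shows "\<not> (\<exists>Y. connected_division n Y \<and> (\<forall>i<n. util v Y i i > util v X i i))"
proof
  assume "\<exists>Y. connected_division n Y \<and> (\<forall>i<n. util v Y i i > util v X i i)"
  then obtain Y where Y: "connected_division n Y" and dom: "\<forall>i<n. util v Y i i > util v X i i"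
    by blast
  have "\<forall>j<n. \<exists>ab. 0 \<le> fst ab \<and> snd ab \<le> 1 \<and> X j = {fst ab<..<snd ab}"
    using assms(2) oi_pair unfolding complete_division_def connected_division_def by blast
  then obtain ab where ab: "\<And>j. j < n \<Longrightarrow> 0 \<le> fst (ab j) \<and> snd (ab j) \<le> 1 \<and> X j = {fst (ab j)<..<snd (ab j)}"
    by (elim choice_lt) blast
  define a where "a j = fst (ab j)" for j
  define b where "b j = snd (ab j)" for j
  have Xab: "\<And>j. j < n \<Longrightarrow> X j = {a j<..<b j}" and a0: "\<And>j. j < n \<Longrightarrow> 0 \<le> a j"
    and b1: "\<And>j. j < n \<Longrightarrow> b j \<le> 1"
    using ab by (auto simp: a_def b_def)
  have Xdisj: "\<And>i j. i < n \<Longrightarrow> j < n \<Longrightarrow> i \<noteq> j \<Longrightarrow> X i \<inter> X j = {}"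
    using assms(2) unfolding complete_division_def connected_division_def by blast
  have cov: "(\<Union>j<n. closure {a j<..<b j}) = {0..1}"
    using assms(2) Xab unfolding complete_division_def by auto
  have "\<forall>i<n. \<exists>cd. 0 \<le> fst cd \<and> snd cd \<le> 1 \<and> Y i = {fst cd<..<snd cd}"
    using Y oi_pair unfolding connected_division_def by blast
  then obtain cd where cd: "\<And>i. i < n \<Longrightarrow> 0 \<le> fst (cd i) \<and> snd (cd i) \<le> 1 \<and> Y i = {fst (cd i)<..<snd (cd i)}"
    by (elim choice_lt) blast
  have Ydisj: "\<And>i j. i < n \<Longrightarrow> j < n \<Longrightarrow> i \<noteq> j \<Longrightarrow> Y i \<inter> Y j = {}"
    using Y unfolding connected_division_def by blast
  have meas: "\<And>i Z. i < n \<Longrightarrow> open Z \<Longrightarrow> Z \<subseteq> {0..1} \<Longrightarrow> Z \<in> sets (v i)"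
  proof -
    fix i Z assume i: "i < n" and Z: "open Z" "Z \<subseteq> {0..1::real}"
    have "sets (v i) = sets (restrict_space borel {0..1})"
      using assms(1) i unfolding valuation_def by blast
    moreover have "Z \<in> sets (restrict_space borel {0..1::real})"
      using Z by (subst sets_restrict_space_iff) auto
    ultimately show "Z \<in> sets (v i)" by simp
  qed
  have fin: "\<And>i. i < n \<Longrightarrow> finite_measure (v i)"
    using assms(1) unfolding valuation_def by (auto intro: prob_space.finite_measure)
  have ex_p: "\<forall>i<n. \<exists>p. p \<in> Y i \<and> (\<forall>j<n. p \<notin> X j)"
  proof (intro allI impI, rule ccontr)
    fix i assume i: "i < n" and nex: "\<not> (\<exists>p. p \<in> Y i \<and> (\<forall>j<n. p \<notin> X j))"
    have Ysub: "Y i \<subseteq> {0..1}" using cd[OF i] by auto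
    have Xsub: "\<And>j. j < n \<Longrightarrow> X j \<subseteq> {0..1}" proof -
      fix j assume j: "j < n"
      show "X j \<subseteq> {0..1}" using Xab[OF j] a0[OF j] b1[OF j] by auto
    qed
    have Xopen: "\<And>j. j < n \<Longrightarrow> open (X j)" using Xab by simp
    have "Y i \<noteq> {}"
    proof
      assume "Y i = {}"
      hence "util v Y i i = 0" by (simp add: util_def)
      moreover have "util v X i i \<ge> 0" by (simp add: util_def)
      ultimately show False using dom i by auto
    qed
    then obtain y where y: "y \<in> Y i" by blast
    then obtain j where j: "j < n" "y \<in> X j" using nex by blast
    define V where "V = (\<Union>k\<in>{k. k < n \<and> k \<noteq> j}. X k)"
    have "open V" unfolding V_def using Xopen by auto
    have "X j \<inter> V \<inter> Y i = {}" unfolding V_def using Xdisj j(1) by blast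
    moreover have "Y i \<subseteq> X j \<union> V" unfolding V_def using nex by blast
    moreover have "connected (Y i)" using cd[OF i] by simp
    ultimately have "X j \<inter> Y i = {} \<or> V \<inter> Y i = {}"
      using connectedD Xopen[OF j(1)] \<open>open V\<close> by blast
    hence "Y i \<subseteq> X j" using y j \<open>Y i \<subseteq> X j \<union> V\<close> by blast
    have "measure (v i) (Y i) \<le> measure (v i) (X j)"
      using finite_measure.finite_measure_mono[OF fin[OF i] \<open>Y i \<subseteq> X j\<close> meas[OF i Xopen[OF j(1)] Xsub[OF j(1)]]] .
    moreover have "util v X i j \<le> util v X i i" using assms(3) i j(1) unfolding envy_free_def by blast
    moreover have "util v X i i < util v Y i i" using dom i by blast
    ultimately show False by (simp add: util_def)
  qed
  then obtain p where p: "\<And>i. i < n \<Longrightarrow> p i \<in> Y i \<and> (\<forall>j<n. p i \<notin> X j)" by (elim choice_lt) blast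
  have p01: "\<And>i. i < n \<Longrightarrow> 0 < p i \<and> p i < 1"
  proof -
    fix i assume i: "i < n"
    show "0 < p i \<and> p i < 1" using p[OF i] cd[OF i] by auto
  qed
  have ex_g: "\<forall>i<n. \<exists>j. j < n \<and> a j = p i"
  proof (intro allI impI)
    fix i assume i: "i < n"
    obtain j where j: "j < n" "a j \<le> p i" "p i < b j"
      using cover_left[OF cov, of "p i"] p01[OF i] by auto
    have "p i \<notin> {a j<..<b j}" using p[OF i] Xab[OF j(1)] j(1) by blast
    thus "\<exists>j. j < n \<and> a j = p i" using j by auto
  qed
  then obtain g where g: "\<And>i. i < n \<Longrightarrow> g i < n \<and> a (g i) = p i" by (elim choice_lt) blast
  obtain j0 where j0: "j0 < n" "a j0 \<le> 0" "0 < b j0"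
    using cover_left[OF cov, of 0] by auto
  have "inj_on g {..<n}"
  proof (rule inj_onI)
    fix i i' assume "i \<in> {..<n}" "i' \<in> {..<n}" "g i = g i'"
    hence ii: "i < n" "i' < n" "g i = g i'" by auto
    have "a (g i) = p i" "a (g i') = p i'" using g[OF ii(1)] g[OF ii(2)] by auto
    hence pp: "p i = p i'" using ii(3) by metis
    show "i = i'"
    proof (rule ccontr)
      assume "i \<noteq> i'"
      hence "Y i \<inter> Y i' = {}" using Ydisj[OF ii(1) ii(2)] by simp
      moreover have "p i \<in> Y i" "p i \<in> Y i'" using p[OF ii(1)] p[OF ii(2)] pp by auto
      ultimately show False by blast
    qed
  qed
  moreover have "g ` {..<n} \<subseteq> {..<n} - {j0}"
    proof
    fix x assume "x \<in> g ` {..<n}"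
    then obtain i where i: "i < n" "x = g i" by auto
    have "a (g i) = p i" "g i < n" using g[OF i(1)] by auto
    moreover have "0 < p i" using p01[OF i(1)] by simp
    ultimately show "x \<in> {..<n} - {j0}" using i j0 a0 by auto
  qed
  ultimately have "card {..<n} \<le> card ({..<n} - {j0})"
    by (rule card_inj_on_le) simp
  moreover have "card ({..<n} - {j0}) = n - 1" using j0(1) by simp
  ultimately show False using j0(1) by simp
qed

end
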